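(* Let $\lambda \geq 1$, $\mu \geq 0$, $\delta \geq 0$, $t\in\left(\tfrac12,1\right)$ and $\xi=\frac{2\lambda+\mu}{2\lambda+1}$. Let $f(z)=z+\sum_{n=2}^{\infty}a_n z^n$ belong to the class $\mathscr{B}_{\Sigma}^{\mu}(\lambda,\delta,t)$ defined below. Put \[ D:=(\lambda+\mu+2\xi\delta)^2-2\left[2(\lambda+\mu+2\xi\delta)^2-\big((2\lambda+\mu)(\mu+1)+12\xi\delta\big)\right]t^{2},\qquad M:=\frac{|D|}{4(2\lambda+\mu+6\xi\delta)t^{2}}. \] Then for each real number $\eta$, \[ |a_{3}-\eta a_{2}^{2}|\leq \begin{cases} \dfrac{2t}{2\lambda +\mu+6\xi\delta}, & |\eta -1|\leq M,\\[2mm] \dfrac{8|\eta -1|t^{3}}{|D|}, & |\eta -1|\geq M. \end{cases} \]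
   Context: Let $\mathbb{U}=\{z\in\mathbb{C}:|z|<1\}$ and let $\mathcal{A}$ be the class of analytic functions $f$ on $\mathbb{U}$ with $f(0)=0$, $f'(0)=1$, i.e. $f(z)=z+\sum_{n\ge2}a_nz^n$. A function $f\in\mathcal{A}$ is bi-univalent if $f$ is univalent on $\mathbb{U}$ and its inverse $g=f^{-1}$ (defined near $0$, with $f^{-1}(f(z))=z$, and $g(w)=w-a_2w^2+(2a_2^2-a_3)w^3-\cdots$) extends to a univalent function on $\mathbb{U}$; $\Sigma$ denotes the class of such $f$. For analytic $F,G$ on $\mathbb{U}$, $F\prec G$ (subordination) means there is an analytic $\omega$ on $\mathbb{U}$ with $\omega(0)=0$, $|\omega(z)|<1$ and $F=G\circ\omega$. The Chebyshev polynomials of the second kind are $U_0(t)=1$, $U_1(t)=2t$, $U_{n+1}(t)=2tU_n(t)-U_{n-1}(t)$, with generating function $H(z,t)=\frac{1}{1-2tz+z^2}=\sum_{n\ge0}U_n(t)z^n$. For $\lambda\ge1,\mu\ge0,\delta\ge0$, $t\in(\frac12,1)$ and $\xi=\frac{2\lambda+\mu}{2\lambda+1}$, the class $\mathscr{B}_{\Sigma}^{\mu}(\lambda,\delta,t)$ consists of all $f\in\Sigma$ such that, with $g=f^{-1}$, \[ (1-\lambda)\left(\tfrac{f(z)}{z}\right)^{\mu}+\lambda f'(z)\left(\tfrac{f(z)}{z}\right)^{\mu-1}+\xi\delta z f''(z)\prec H(z,t) \] and \[ (1-\lambda)\left(\tfrac{g(w)}{w}\right)^{\mu}+\lambda g'(w)\left(\tfrac{g(w)}{w}\right)^{\mu-1}+\xi\delta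 w g''(w)\prec H(w,t), \] where powers are taken with the principal branch equal to $1$ at the origin. *)

theory Defs
  imports "HOL-Analysis.Analysis"
begin

definition normalized_analytic :: "(complex \<Rightarrow> complex) \<Rightarrow> bool" where
  "normalized_analytic f \<longleftrightarrow> f holomorphic_on ball 0 1 \<and> f 0 = 0 \<and> deriv f 0 = 1"

definition univalent_inverse_ext :: "(complex \<Rightarrow> complex) \<Rightarrow> (complex \<Rightarrow> complex) \<Rightarrow> bool" where
  "univalent_inverse_ext f g \<longleftrightarrow> g holomorphic_on ball 0 1 \<and> inj_on g (ball 0 1) \<and> g 0 = 0 \<and>
     (\<exists>r>0. \<forall>w\<in>ball 0 r. f (g w) = w)"

definition bi_univalent :: "(complex \<Rightarrow> complex) \<Rightarrow> bool" where
  "bi_univalent f \<longleftrightarrow> normalized_analytic f \<and> inj_on f (ball 0 1) \<and>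
     (\<exists>g. univalent_inverse_ext f g)"

definition subordinate :: "(complex \<Rightarrow> complex) \<Rightarrow> (complex \<Rightarrow> complex) \<Rightarrow> bool" where
  "subordinate F G \<longleftrightarrow> (\<exists>\<omega>. \<omega> holomorphic_on ball 0 1 \<and> \<omega> 0 = 0 \<and>
     (\<forall>z\<in>ball 0 1. norm (\<omega> z) < 1 \<and> F z = G (\<omega> z)))"

text \<open>Generating function of Chebyshev polynomials of the second kind.\<close>
definition cheb_H :: "real \<Rightarrow> complex \<Rightarrow> complex" where
  "cheb_H t z = 1 / (1 - 2 * complex_of_real t * z + z ^ 2)"

text \<open>L is the branch of log(h(z)/z) on the disc vanishing at 0 (principal branch of powers
  equal to 1 at the origin: (h(z)/z)^a := exp(a * L z)).\<close>
definition quotient_log :: "(complex \<Rightarrow> complex) \<Rightarrow> (complex \<Rightarrow> complex) \<Rightarrow> bool" where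
  "quotient_log h L \<longleftrightarrow> L holomorphic_on ball 0 1 \<and> L 0 = 0 \<and>
     (\<forall>z\<in>ball 0 1. z \<noteq> 0 \<longrightarrow> exp (L z) = h z / z)"

definition xi_par :: "real \<Rightarrow> real \<Rightarrow> real" where
  "xi_par lam \<mu> = (2 * lam + \<mu>) / (2 * lam + 1)"

definition B_op :: "real \<Rightarrow> real \<Rightarrow> real \<Rightarrow> (complex \<Rightarrow> complex) \<Rightarrow> (complex \<Rightarrow> complex)
    \<Rightarrow> complex \<Rightarrow> complex" where
  "B_op lam \<mu> \<delta> h L z =
     (1 - complex_of_real lam) * exp (complex_of_real \<mu> * L z)
     + complex_of_real lam * deriv h z * exp (complex_of_real (\<mu> - 1) * L z)
     + complex_of_real (xi_par lam \<mu> * \<delta>) * z * (deriv ^^ 2) h z"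

definition B_subord :: "real \<Rightarrow> real \<Rightarrow> real \<Rightarrow> real \<Rightarrow> (complex \<Rightarrow> complex) \<Rightarrow> bool" where
  "B_subord lam \<mu> \<delta> t h \<longleftrightarrow>
     (\<exists>L. quotient_log h L \<and> subordinate (B_op lam \<mu> \<delta> h L) (cheb_H t))"

definition B_class :: "real \<Rightarrow> real \<Rightarrow> real \<Rightarrow> real \<Rightarrow> (complex \<Rightarrow> complex) set" where
  "B_class \<mu> lam \<delta> t = {f. bi_univalent f \<and>
     (\<exists>g. univalent_inverse_ext f g \<and> B_subord lam \<mu> \<delta> t f \<and> B_subord lam \<mu> \<delta> t g)}"

definition coeff_a :: "(complex \<Rightarrow> complex) \<Rightarrow> nat \<Rightarrow> complex" where
  "coeff_a f n = (deriv ^^ n) f 0 / of_nat (fact n)"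

end

theory Submission
  imports Defs "HOL-Complex_Analysis.Complex_Analysis"
begin

lemma comp_holo:
  fixes h \<phi> :: "complex \<Rightarrow> complex"
  assumes "\<phi> holomorphic_on S" "h holomorphic_on T" "\<phi> ` S \<subseteq> T"
  shows "(\<lambda>x. h (\<phi> x)) holomorphic_on S"
  using holomorphic_on_compose_gen[OF assms] by (simp add: o_def)

lemma chain1:
  fixes h \<phi> :: "complex \<Rightarrow> complex"
  assumes "open S" "open T" "\<phi> holomorphic_on S" "h holomorphic_on T" "\<phi> ` S \<subseteq> T" "z \<in> S"
  shows "deriv (\<lambda>x. h (\<phi> x)) z = deriv h (\<phi> z) * deriv \<phi> z"
proof -
  have "h analytic_on {\<phi> z}" using assms analytic_at by blast
  moreover have "\<phi> analytic_on {z}" using assms analytic_at by blast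
  ultimately show ?thesis by (rule deriv_compose_analytic)
qed

lemma chain2:
  fixes h \<phi> :: "complex \<Rightarrow> complex"
  assumes "open S" "open T" "\<phi> holomorphic_on S" "h holomorphic_on T" "\<phi> ` S \<subseteq> T" "z \<in> S"
  shows "(deriv ^^ 2) (\<lambda>x. h (\<phi> x)) z = (deriv ^^ 2) h (\<phi> z) * (deriv \<phi> z)^2 + deriv h (\<phi> z) * (deriv ^^ 2) \<phi> z"
proof -
  have ev: "eventually (\<lambda>x. x \<in> S) (nhds z)" using assms eventually_nhds_in_open by blast
  have "deriv (deriv (\<lambda>x. h (\<phi> x))) z = deriv (\<lambda>x. deriv h (\<phi> x) * deriv \<phi> x) z"
    by (intro deriv_cong_ev refl eventually_mono[OF ev] chain1[OF assms(1-5)])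
  also have "\<dots> = deriv h (\<phi> z) * deriv (deriv \<phi>) z + deriv (\<lambda>x. deriv h (\<phi> x)) z * deriv \<phi> z"
    using assms
    by (simp add: holomorphic_on_imp_differentiable_at[OF holomorphic_deriv_compose[OF assms(4,3,5,2)]]
        holomorphic_on_imp_differentiable_at[OF holomorphic_deriv[OF assms(3,1)]])
  also have "deriv (\<lambda>x. deriv h (\<phi> x)) z = deriv (deriv h) (\<phi> z) * deriv \<phi> z"
    by (intro chain1[of S T] assms holomorphic_deriv)
  finally show ?thesis by (simp add: numeral_2_eq_2 power2_eq_square algebra_simps)
qed

lemma chain3:
  fixes h \<phi> :: "complex \<Rightarrow> complex"
  assumes "open S" "open T" "\<phi> holomorphic_on S" "h holomorphic_on T" "\<phi> ` S \<subseteq> T" "z \<in> S"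
  shows "(deriv ^^ 3) (\<lambda>x. h (\<phi> x)) z = (deriv ^^ 3) h (\<phi> z) * (deriv \<phi> z)^3
     + 3 * (deriv ^^ 2) h (\<phi> z) * deriv \<phi> z * (deriv ^^ 2) \<phi> z + deriv h (\<phi> z) * (deriv ^^ 3) \<phi> z"
proof -
  have e3: "(deriv ^^ 3) F = (deriv ^^ 2) (deriv F)" for F :: "complex \<Rightarrow> complex"
    by (simp add: numeral_3_eq_3 numeral_2_eq_2)
  have "(deriv ^^ 3) (\<lambda>x. h (\<phi> x)) z = (deriv ^^ 2) (\<lambda>x. deriv h (\<phi> x) * deriv \<phi> x) z"
    unfolding e3
  proof (rule higher_deriv_transform_within_open[of _ S])
    show "deriv (\<lambda>x. h (\<phi> x)) holomorphic_on S"
      by (rule holomorphic_deriv[OF comp_holo[OF assms(3,4,5)] assms(1)])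
    show "(\<lambda>x. deriv h (\<phi> x) * deriv \<phi> x) holomorphic_on S"
      by (rule holomorphic_on_mult[OF holomorphic_deriv_compose[OF assms(4,3,5,2)] holomorphic_deriv[OF assms(3,1)]])
  qed (use assms chain1[OF assms(1-5)] in auto)
  also have "\<dots> = (\<Sum>i = 0..2. of_nat (2 choose i) * (deriv ^^ i) (\<lambda>x. deriv h (\<phi> x)) z * (deriv ^^ (2-i)) (deriv \<phi>) z)"
    by (rule higher_deriv_mult[OF holomorphic_deriv_compose[OF assms(4,3,5,2)] holomorphic_deriv[OF assms(3,1)] assms(1,6)])
  also have "\<dots> = deriv h (\<phi> z) * (deriv ^^ 2) (deriv \<phi>) z + 2 * deriv (\<lambda>x. deriv h (\<phi> x)) z * deriv (deriv \<phi>) z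
      + (deriv ^^ 2) (\<lambda>x. deriv h (\<phi> x)) z * deriv \<phi> z"
    by (simp add: numeral_2_eq_2)
  also have "deriv (\<lambda>x. deriv h (\<phi> x)) z = deriv (deriv h) (\<phi> z) * deriv \<phi> z"
    by (intro chain1[of S T] assms holomorphic_deriv)
  also have "(deriv ^^ 2) (\<lambda>x. deriv h (\<phi> x)) z = (deriv ^^ 2) (deriv h) (\<phi> z) * (deriv \<phi> z)^2 + deriv (deriv h) (\<phi> z) * (deriv ^^ 2) \<phi> z"
    using chain2[of S T \<phi> "deriv h" z] assms holomorphic_deriv by simp
  finally show ?thesis by (simp add: numeral_3_eq_3 numeral_2_eq_2 power2_eq_square power3_eq_cube algebra_simps)
qed

lemma deriv_exp_fun: "deriv exp = (exp :: complex \<Rightarrow> complex)"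
  by (rule ext, rule DERIV_imp_deriv, rule DERIV_exp)

lemma higher_deriv_exp [simp]: "(deriv ^^ n) exp = (exp :: complex \<Rightarrow> complex)"
  by (induction n) (simp_all add: deriv_exp_fun)

lemma p_nz:
  assumes "1/2 < t" "t < 1" "norm w < 1"
  shows "1 - 2 * complex_of_real t * w + w^2 \<noteq> 0"
proof
  assume h: "1 - 2 * complex_of_real t * w + w^2 = 0"
  define x where "x = Re w"
  define y where "y = Im w"
  have re: "1 - 2*t*x + x^2 - y^2 = 0" using arg_cong[OF h, of Re]
    by (simp add: x_def y_def power2_eq_square)
  have im: "y * (x - t) = 0" using arg_cong[OF h, of Im]
    by (simp add: x_def y_def power2_eq_square algebra_simps)
  have nn: "norm w ^ 2 < 1" using assms(3)
    by (simp add: power_less_one_iff)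
  hence n: "x^2 + y^2 < 1" by (simp add: x_def y_def cmod_power2)
  have t2: "t^2 < 1" using assms(1,2) by (simp add: power_less_one_iff)
  from im have "y = 0 \<or> x = t" by simp
  thus False
  proof
    assume "y = 0"
    hence "(x-t)^2 + (1 - t^2) = 0" using re by (simp add: power2_eq_square algebra_simps)
    moreover have "(x-t)^2 \<ge> 0" by simp
    ultimately show False using t2 by linarith
  next
    assume "x = t"
    hence "x^2 + y^2 = 1" using re by (simp add: power2_eq_square algebra_simps)
    thus False using n by simp
  qed
qed

lemma H_holo: "1/2 < t \<Longrightarrow> t < 1 \<Longrightarrow> cheb_H t holomorphic_on ball 0 1"
  unfolding cheb_H_def by (intro holomorphic_intros) (metis p_nz mem_ball_0)

lemma H_deriv:
  assumes "1/2 < t" "t < 1" "norm w < 1"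
  shows "(cheb_H t has_field_derivative
     (2 * complex_of_real t - 2 * w) / (1 - 2 * complex_of_real t * w + w^2)^2) (at w)"
proof -
  have nz: "1 - 2 * complex_of_real t * w + w^2 \<noteq> 0" using p_nz assms by blast
  show ?thesis unfolding cheb_H_def[abs_def] using nz
    by (auto intro!: derivative_eq_intros simp: power2_eq_square field_simps)
qed

lemma H_d1:
  assumes "1/2 < t" "t < 1"
  shows "deriv (cheb_H t) 0 = 2 * complex_of_real t"
  using H_deriv[OF assms, of 0] by (simp add: DERIV_imp_deriv)

lemma H_d2:
  assumes "1/2 < t" "t < 1"
  shows "(deriv ^^ 2) (cheb_H t) 0 = 8 * complex_of_real t ^ 2 - 2"
proof -
  have ev: "eventually (\<lambda>w. w \<in> ball 0 1) (nhds (0::complex))"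
    by (intro eventually_nhds_in_open) auto
  have "deriv (deriv (cheb_H t)) 0 =
      deriv (\<lambda>w. (2 * complex_of_real t - 2 * w) / (1 - 2 * complex_of_real t * w + w^2)^2) 0"
    by (intro deriv_cong_ev refl eventually_mono[OF ev] DERIV_imp_deriv H_deriv[OF assms]) simp
  also have "\<dots> = 8 * complex_of_real t ^ 2 - 2"
  proof (rule DERIV_imp_deriv)
    show "((\<lambda>w. (2 * complex_of_real t - 2 * w) / (1 - 2 * complex_of_real t * w + w^2)^2)
       has_field_derivative 8 * complex_of_real t ^ 2 - 2) (at 0)"
      by (auto intro!: derivative_eq_intros simp: power2_eq_square algebra_simps)
  qed
  finally show ?thesis by (simp add: numeral_2_eq_2)
qed

lemma cauchy2:
  fixes \<omega> :: "complex \<Rightarrow> complex"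
  assumes hol: "\<omega> holomorphic_on ball 0 1" and bd: "\<And>z. z \<in> ball 0 1 \<Longrightarrow> norm (\<omega> z) < 1"
  shows "norm ((deriv ^^ 2) \<omega> 0) \<le> 2"
proof (rule ccontr)
  define x where "x = norm ((deriv ^^ 2) \<omega> 0)"
  assume "\<not> norm ((deriv ^^ 2) \<omega> 0) \<le> 2"
  hence x2: "x > 2" by (simp add: x_def)
  define s where "s = (2/x + 1) / 2"
  have s1: "2/x < s" "s < 1" using x2 by (auto simp: s_def field_simps)
  have s0: "0 < s" using x2 by (simp add: s_def add_pos_pos)
  define r where "r = sqrt s"
  have r0: "0 < r" and r1: "r < 1" and r2: "r^2 = s" using s0 s1 by (auto simp: r_def)
  have "norm ((deriv ^^ 2) \<omega> 0) \<le> fact 2 * 1 / r^2"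
  proof (rule Cauchy_inequality)
    show "\<omega> holomorphic_on ball 0 r" by (rule holomorphic_on_subset[OF hol]) (use r1 in auto)
    show "continuous_on (cball 0 r) \<omega>"
      by (rule continuous_on_subset[OF holomorphic_on_imp_continuous_on[OF hol]]) (use r1 in auto)
    show "0 < r" by (rule r0)
    fix z :: complex assume "norm (0 - z) = r"
    hence "z \<in> ball 0 1" using r1 by simp
    thus "norm (\<omega> z) \<le> 1" using bd less_imp_le by blast
  qed
  hence "x \<le> 2 / s" by (simp add: x_def r2)
  hence "x * s \<le> 2" using s0 by (simp add: field_simps)
  moreover have "x * s = (2 + x) / 2" using x2 by (simp add: s_def field_simps)
  ultimately have "(2 + x) / 2 \<le> 2" by simp
  thus False using x2 by simp
qed

lemma inv_derivs:
  fixes f g :: "complex \<Rightarrow> complex"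
  assumes fh: "f holomorphic_on ball 0 1" and f0: "f 0 = 0" and f1: "deriv f 0 = 1"
    and ui: "univalent_inverse_ext f g"
  shows "deriv g 0 = 1 \<and> (deriv ^^ 2) g 0 = - (deriv ^^ 2) f 0
     \<and> (deriv ^^ 3) g 0 = 3 * ((deriv ^^ 2) f 0)^2 - (deriv ^^ 3) f 0"
proof -
  obtain r where r: "r > 0" "\<And>w. w \<in> ball 0 r \<Longrightarrow> f (g w) = w"
    and gh: "g holomorphic_on ball 0 1" and g0: "g 0 = 0"
    using ui unfolding univalent_inverse_ext_def by blast
  define S where "S = ball 0 (min r 1) \<inter> g -` ball 0 1"
  have oS: "open S" unfolding S_def
    by (rule continuous_open_preimage) (auto intro!: holomorphic_on_imp_continuous_on holomorphic_on_subset[OF gh])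
  have S0: "0 \<in> S" using r g0 by (simp add: S_def)
  have gS: "g holomorphic_on S" by (rule holomorphic_on_subset[OF gh]) (auto simp: S_def)
  have gT: "g ` S \<subseteq> ball 0 1" by (auto simp: S_def)
  have fg: "\<And>w. w \<in> S \<Longrightarrow> f (g w) = w" using r by (auto simp: S_def)
  have hc: "(\<lambda>w. f (g w)) holomorphic_on S" by (rule comp_holo[OF gS fh gT])
  have idh: "(\<lambda>w::complex. w) holomorphic_on S" by simp
  have E: "(deriv ^^ n) (\<lambda>w. f (g w)) 0 = (deriv ^^ n) (\<lambda>w. w) 0" for n
    by (rule higher_deriv_transform_within_open[OF hc idh oS S0 fg])
  have e1: "deriv f 0 * deriv g 0 = 1"
    using E[of 1] chain1[OF oS _ gS fh gT S0] g0 by simp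
  hence g1: "deriv g 0 = 1" using f1 by simp
  have e2: "(deriv ^^ 2) f 0 + (deriv ^^ 2) g 0 = 0"
    using E[of 2] chain2[OF oS _ gS fh gT S0] g0 g1 f1 by simp
  have e3: "(deriv ^^ 3) f 0 + 3 * (deriv ^^ 2) f 0 * (deriv ^^ 2) g 0 + (deriv ^^ 3) g 0 = 0"
    using E[of 3] chain3[OF oS _ gS fh gT S0] g0 g1 f1 by simp
  from e2 have g2: "(deriv ^^ 2) g 0 = - (deriv ^^ 2) f 0" by (metis add.commute eq_neg_iff_add_eq_0)
  from e3 g2 have "(deriv ^^ 3) g 0 = 3 * ((deriv ^^ 2) f 0)^2 - (deriv ^^ 3) f 0"
    by (simp add: power2_eq_square algebra_simps eq_neg_iff_add_eq_0)
  with g1 g2 show ?thesis by simp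
qed

lemma alg1:
  fixes l m k h2 L1 R :: complex
  assumes "(1 - l) * (m * L1) + l * (h2 + (m - 1) * L1) + k * h2 = R" "L1 = h2/2"
  shows "(l + m + 2*k) * (h2/2) = R"
  using assms by (simp add: field_simps)

lemma alg2:
  fixes l m k h2 h3 L1 L2 R :: complex
  assumes H: "(1 - l) * ((m * L1)^2 + m * L2)
      + l * (h3 + 2 * h2 * ((m - 1) * L1)
          + (((m - 1) * L1)^2 + (m - 1) * L2))
      + k * (2 * h3) = R" and e: "L1 = h2/2" "L2 = h3/3 - L1^2"
  shows "2 * ((2*l + m + 6 * k) * (h3 / 6)
        + ((2*l + m) * (m - 1) / 2) * (h2 / 2)^2) = R"
proof -
  have "2 * ((2*l + m + 6 * k) * (h3 / 6)
        + ((2*l + m) * (m - 1) / 2) * (h2 / 2)^2) = (1 - l) * ((m * L1)^2 + m * L2)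
      + l * (h3 + 2 * h2 * ((m - 1) * L1)
          + (((m - 1) * L1)^2 + (m - 1) * L2))
      + k * (2 * h3)" unfolding e by (simp add: field_simps) (simp add: algebra_simps power2_eq_square)
  thus ?thesis using H by simp
qed

lemma side:
  fixes lam \<mu> \<delta> t :: real and h :: "complex \<Rightarrow> complex"
  assumes t: "1/2 < t" "t < 1"
    and hh: "h holomorphic_on ball 0 1" and h0: "h 0 = 0" and h1: "deriv h 0 = 1"
    and Bs: "B_subord lam \<mu> \<delta> t h"
  shows "\<exists>c1 P. norm P \<le> 2 \<and>
     complex_of_real (lam + \<mu> + 2 * xi_par lam \<mu> * \<delta>) * ((deriv ^^ 2) h 0 / 2) = 2 * complex_of_real t * c1 \<and>
     2 * (complex_of_real (2*lam + \<mu> + 6 * xi_par lam \<mu> * \<delta>) * ((deriv ^^ 3) h 0 / 6)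
        + complex_of_real ((2*lam + \<mu>) * (\<mu> - 1) / 2) * ((deriv ^^ 2) h 0 / 2)^2)
       = (8 * complex_of_real t ^ 2 - 2) * c1^2 + 2 * complex_of_real t * P"
proof -
  define S :: "complex set" where "S = ball 0 1"
  have oS: "open S" and S0: "0 \<in> S" by (auto simp: S_def)
  obtain L \<omega> where qL: "quotient_log h L" and wh: "\<omega> holomorphic_on S" and w0: "\<omega> 0 = 0"
     and wb: "\<And>z. z \<in> S \<Longrightarrow> norm (\<omega> z) < 1"
     and wE: "\<And>z. z \<in> S \<Longrightarrow> B_op lam \<mu> \<delta> h L z = cheb_H t (\<omega> z)"
    using Bs unfolding B_subord_def subordinate_def S_def by blast
  have Lh: "L holomorphic_on S" and L0: "L 0 = 0"
    and Le: "\<And>z. z \<in> S \<Longrightarrow> z \<noteq> 0 \<Longrightarrow> exp (L z) = h z / z"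
    using qL unfolding quotient_log_def S_def by auto
  have hS: "h holomorphic_on S" using hh by (simp add: S_def)
  have wS: "\<omega> ` S \<subseteq> S" using wb by (auto simp: S_def)
  have HS: "cheb_H t holomorphic_on S" using H_holo[OF t] by (simp add: S_def)
  define L1 where "L1 = deriv L 0"
  define L2 where "L2 = (deriv ^^ 2) L 0"
  define E where "E = (\<lambda>a::real. \<lambda>z. exp (complex_of_real a * L z))"
  have Eh: "E a holomorphic_on S" for a unfolding E_def using Lh by (intro holomorphic_intros)
  have aLh: "(\<lambda>z. complex_of_real a * L z) holomorphic_on S" for a using Lh by (intro holomorphic_intros)
  have aL1: "deriv (\<lambda>z. complex_of_real a * L z) 0 = complex_of_real a * L1" for a
    using higher_deriv_cmult[OF Lh S0 oS, of 1] by (simp add: L1_def)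
  have aL2: "(deriv ^^ 2) (\<lambda>z. complex_of_real a * L z) 0 = complex_of_real a * L2" for a
    using higher_deriv_cmult[OF Lh S0 oS, of 2] by (simp add: L2_def)
  have E0: "E a 0 = 1" for a by (simp add: E_def L0)
  have E1: "deriv (E a) 0 = complex_of_real a * L1" for a
    using chain1[OF oS open_UNIV aLh holomorphic_on_exp _ S0] aL1 by (simp add: E_def L0 deriv_exp_fun)
  have E2: "(deriv ^^ 2) (E a) 0 = (complex_of_real a * L1)^2 + complex_of_real a * L2" for a
    using chain2[OF oS open_UNIV aLh holomorphic_on_exp _ S0] aL1 aL2 by (simp add: E_def L0 deriv_exp_fun)
  have hz: "h z = z * E 1 z" if "z \<in> S" for z
  proof (cases "z = 0")
    case True thus ?thesis by (simp add: h0)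
  next
    case False thus ?thesis using Le[OF that False] by (simp add: E_def)
  qed
  have zEh: "(\<lambda>z. z * E 1 z) holomorphic_on S" using Eh by (intro holomorphic_intros)
  have hE: "(deriv ^^ n) h 0 = (deriv ^^ n) (\<lambda>z. z * E 1 z) 0" for n
    by (rule higher_deriv_transform_within_open[OF hS zEh oS S0 hz])
  have hEm: "(deriv ^^ n) (\<lambda>z. z * E 1 z) 0 = (\<Sum>i = 0..n. of_nat (n choose i) * (deriv ^^ i) (\<lambda>z. z) 0 * (deriv ^^ (n-i)) (E 1) 0)" for n
    by (rule higher_deriv_mult[OF _ Eh oS S0]) simp
  have h2: "(deriv ^^ 2) h 0 = 2 * L1"
    using hE[of 2] hEm[of 2] E1[of 1] by (simp add: numeral_2_eq_2)
  have h3: "(deriv ^^ 3) h 0 = 3 * (L1^2 + L2)"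
    using hE[of 3] hEm[of 3] E2[of 1] by (simp add: numeral_3_eq_3 numeral_2_eq_2)
  define \<kappa> where "\<kappa> = complex_of_real (xi_par lam \<mu> * \<delta>)"
  define d2 where "d2 = (deriv ^^ 2) h"
  have d2h: "d2 holomorphic_on S" unfolding d2_def by (intro holomorphic_higher_deriv hS oS)
  have dh: "deriv h holomorphic_on S" by (intro holomorphic_deriv hS oS)
  have Fform: "B_op lam \<mu> \<delta> h L = (\<lambda>z. ((1 - complex_of_real lam) * E \<mu> z
        + complex_of_real lam * (deriv h z * E (\<mu> - 1) z)) + \<kappa> * (z * d2 z))"
    by (rule ext) (simp add: B_op_def E_def \<kappa>_def d2_def algebra_simps)
  have p1h: "(\<lambda>z. (1 - complex_of_real lam) * E \<mu> z) holomorphic_on S" using Eh by (intro holomorphic_intros)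
  have p2h: "(\<lambda>z. complex_of_real lam * (deriv h z * E (\<mu> - 1) z)) holomorphic_on S"
    by (rule holomorphic_on_mult[OF holomorphic_on_const holomorphic_on_mult[OF dh Eh]])
  have p12h: "(\<lambda>z. (1 - complex_of_real lam) * E \<mu> z + complex_of_real lam * (deriv h z * E (\<mu> - 1) z)) holomorphic_on S"
    using p1h p2h by (rule holomorphic_on_add)
  have p3h': "(\<lambda>z. z * d2 z) holomorphic_on S" using d2h by (intro holomorphic_intros)
  have p3h: "(\<lambda>z. \<kappa> * (z * d2 z)) holomorphic_on S" by (rule holomorphic_on_mult[OF holomorphic_on_const p3h'])
  have pEh: "(\<lambda>z. deriv h z * E (\<mu> - 1) z) holomorphic_on S" by (rule holomorphic_on_mult[OF dh Eh])
  have Fn: "(deriv ^^ n) (B_op lam \<mu> \<delta> h L) 0 =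
      (1 - complex_of_real lam) * (deriv ^^ n) (E \<mu>) 0
      + complex_of_real lam * (\<Sum>i = 0..n. of_nat (n choose i) * (deriv ^^ i) (deriv h) 0 * (deriv ^^ (n-i)) (E (\<mu> - 1)) 0)
      + \<kappa> * (\<Sum>i = 0..n. of_nat (n choose i) * (deriv ^^ i) (\<lambda>z. z) 0 * (deriv ^^ (n-i)) d2 0)" for n
    unfolding Fform
    by (simp add: higher_deriv_add[OF p12h p3h oS S0] higher_deriv_add[OF p1h p2h oS S0]
        higher_deriv_cmult[OF Eh S0 oS] higher_deriv_cmult[OF pEh S0 oS] higher_deriv_cmult[OF p3h' S0 oS]
        higher_deriv_mult[OF dh Eh oS S0] higher_deriv_mult[OF _ d2h oS S0])
  have Fh: "B_op lam \<mu> \<delta> h L holomorphic_on S" unfolding Fform using p12h p3h by (rule holomorphic_on_add)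
  have Hw: "(\<lambda>z. cheb_H t (\<omega> z)) holomorphic_on S" by (rule comp_holo[OF wh HS wS])
  have FH: "(deriv ^^ n) (B_op lam \<mu> \<delta> h L) 0 = (deriv ^^ n) (\<lambda>z. cheb_H t (\<omega> z)) 0" for n
    by (rule higher_deriv_transform_within_open[OF Fh Hw oS S0 wE])
  define c1 where "c1 = deriv \<omega> 0"
  define P where "P = (deriv ^^ 2) \<omega> 0"
  have R1: "deriv (\<lambda>z. cheb_H t (\<omega> z)) 0 = 2 * complex_of_real t * c1"
    using chain1[OF oS oS wh HS wS S0] H_d1[OF t] by (simp add: w0 c1_def)
  have R2: "(deriv ^^ 2) (\<lambda>z. cheb_H t (\<omega> z)) 0 = (8 * complex_of_real t ^ 2 - 2) * c1^2 + 2 * complex_of_real t * P"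
    using chain2[OF oS oS wh HS wS S0] H_d1[OF t] H_d2[OF t] by (simp add: w0 c1_def P_def)
  have Pb: "norm P \<le> 2" unfolding P_def
    by (rule cauchy2) (use wh wb in \<open>auto simp: S_def\<close>)
  have F1: "deriv (B_op lam \<mu> \<delta> h L) 0 = (1 - complex_of_real lam) * (complex_of_real \<mu> * L1)
      + complex_of_real lam * ((deriv ^^ 2) h 0 + complex_of_real (\<mu> - 1) * L1) + \<kappa> * (deriv ^^ 2) h 0"
    using Fn[of 1] E1 E0 h1 by (simp add: d2_def numeral_2_eq_2)
  have F2: "(deriv ^^ 2) (B_op lam \<mu> \<delta> h L) 0 = (1 - complex_of_real lam) * ((complex_of_real \<mu> * L1)^2 + complex_of_real \<mu> * L2)
      + complex_of_real lam * ((deriv ^^ 3) h 0 + 2 * (deriv ^^ 2) h 0 * (complex_of_real (\<mu> - 1) * L1)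
          + ((complex_of_real (\<mu> - 1) * L1)^2 + complex_of_real (\<mu> - 1) * L2))
      + \<kappa> * (2 * (deriv ^^ 3) h 0)"
    using Fn[of 2] E1 E0 E2 h1 by (simp add: d2_def numeral_2_eq_2 numeral_3_eq_3)
  have L1v: "L1 = (deriv ^^ 2) h 0 / 2" using h2 by simp
  have L2v: "L2 = (deriv ^^ 3) h 0 / 3 - L1^2" unfolding h3 by (simp add: add_divide_distrib)
  show ?thesis
  proof (intro exI conjI)
    show "norm P \<le> 2" by (rule Pb)
    have S1: "(1 - complex_of_real lam) * (complex_of_real \<mu> * L1) + complex_of_real lam * ((deriv ^^ 2) h 0 + (complex_of_real \<mu> - 1) * L1) + \<kappa> * (deriv ^^ 2) h 0 = 2 * complex_of_real t * c1"
      using FH[of 1] F1 R1 by simp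
    have "(complex_of_real lam + complex_of_real \<mu> + 2 * \<kappa>) * ((deriv ^^ 2) h 0 / 2) = 2 * complex_of_real t * c1"
      by (rule alg1[OF S1 L1v])
    thus "complex_of_real (lam + \<mu> + 2 * xi_par lam \<mu> * \<delta>) * ((deriv ^^ 2) h 0 / 2) = 2 * complex_of_real t * c1"
      by (simp add: \<kappa>_def algebra_simps)
    have S2: "(1 - complex_of_real lam) * ((complex_of_real \<mu> * L1)^2 + complex_of_real \<mu> * L2)
      + complex_of_real lam * ((deriv ^^ 3) h 0 + 2 * (deriv ^^ 2) h 0 * ((complex_of_real \<mu> - 1) * L1)
          + (((complex_of_real \<mu> - 1) * L1)^2 + (complex_of_real \<mu> - 1) * L2))
      + \<kappa> * (2 * (deriv ^^ 3) h 0) = (8 * complex_of_real t ^ 2 - 2) * c1^2 + 2 * complex_of_real t * P"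
      using FH[of 2] F2 R2 by simp
    have "2 * ((2 * complex_of_real lam + complex_of_real \<mu> + 6 * \<kappa>) * ((deriv ^^ 3) h 0 / 6)
        + ((2 * complex_of_real lam + complex_of_real \<mu>) * (complex_of_real \<mu> - 1) / 2) * ((deriv ^^ 2) h 0 / 2)^2)
       = (8 * complex_of_real t ^ 2 - 2) * c1^2 + 2 * complex_of_real t * P"
      by (rule alg2[OF S2 L1v L2v])
    thus "2 * (complex_of_real (2*lam + \<mu> + 6 * xi_par lam \<mu> * \<delta>) * ((deriv ^^ 3) h 0 / 6)
        + complex_of_real ((2*lam + \<mu>) * (\<mu> - 1) / 2) * ((deriv ^^ 2) h 0 / 2)^2)
       = (8 * complex_of_real t ^ 2 - 2) * c1^2 + 2 * complex_of_real t * P"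
      by (simp add: \<kappa>_def algebra_simps)
  qed
qed

lemma alg:
  fixes A B C t a2 a3 c1 d1 P Q :: complex
  assumes e1: "A*a2 = 2*t*c1" and e2: "2*(B*a3 + C*a2^2) = (8*t^2-2)*c1^2 + 2*t*P"
    and g1: "A*(-a2) = 2*t*d1" and g2: "2*(B*(2*a2^2 - a3) + C*a2^2) = (8*t^2-2)*d1^2 + 2*t*Q"
    and t: "t \<noteq> 0"
  shows "4*B*(a3 - a2^2) = 2*t*(P-Q)" and "(4*(B+C)*t^2 - (4*t^2-1)*A^2)*a2^2 = 2*t^3*(P+Q)"
proof -
  have "2*t*d1 = 2*t*(-c1)" using e1 g1 by (simp add: algebra_simps)
  hence "2*t = 0 \<or> d1 = -c1" by (simp only: mult_cancel_left)
  hence d: "d1 = -c1" using t by simp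
  show "4*B*(a3 - a2^2) = 2*t*(P-Q)" using e2 g2 d by algebra
  show "(4*(B+C)*t^2 - (4*t^2-1)*A^2)*a2^2 = 2*t^3*(P+Q)" using e1 e2 g2 d by algebra
qed

lemma norm_comb:
  fixes P Q :: complex and u v :: real
  assumes "norm P \<le> 2" "norm Q \<le> 2"
  shows "norm (complex_of_real u * P + complex_of_real v * Q) \<le> \<bar>u\<bar> * 2 + \<bar>v\<bar> * 2"
proof -
  have "norm (complex_of_real u * P + complex_of_real v * Q) \<le> \<bar>u\<bar> * norm P + \<bar>v\<bar> * norm Q"
    by (metis norm_mult norm_of_real norm_triangle_ineq)
  also have "\<dots> \<le> \<bar>u\<bar> * 2 + \<bar>v\<bar> * 2"
    using assms by (intro add_mono mult_left_mono) auto
  finally show ?thesis .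
qed

lemma Xid:
  fixes a2 a3 P Q Bc Dc tc \<eta>c hc :: complex
  assumes "a3 - a2^2 = tc/(2*Bc) * (P-Q)" "Dc * a2^2 = 2*tc^3*(P+Q)" "hc = 4*tc^2*(1-\<eta>c)/Dc" "Bc \<noteq> 0" "Dc \<noteq> 0"
  shows "a3 - \<eta>c*a2^2 = tc/2*(hc + 1/Bc) * P + tc/2*(hc - 1/Bc) * Q"
proof -
  have a2s: "a2^2 = 2*tc^3*(P+Q)/Dc" using assms(2,5) by (simp add: field_simps)
  have a3v: "a3 = a2^2 + tc/(2*Bc)*(P-Q)" using assms(1) by (simp add: algebra_simps)
  show ?thesis unfolding a3v assms(3) a2s using assms(4,5)
    by (simp add: field_simps) (simp add: algebra_simps power2_eq_square power3_eq_cube)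
qed

lemma abs_s1: "\<bar>x\<bar> \<le> (b::real) \<Longrightarrow> \<bar>x + b\<bar> + \<bar>x - b\<bar> = 2*b" by arith
lemma abs_s2: "\<bar>x\<bar> \<ge> (b::real) \<Longrightarrow> b \<ge> 0 \<Longrightarrow> \<bar>x + b\<bar> + \<bar>x - b\<bar> = 2*\<bar>x\<bar>" by arith

theorem theorem2:
  fixes lam \<mu> \<delta> t \<eta> :: real and f :: "complex \<Rightarrow> complex"
  assumes "lam \<ge> 1" "\<mu> \<ge> 0" "\<delta> \<ge> 0" "1/2 < t" "t < 1"
    and "f \<in> B_class \<mu> lam \<delta> t"
  defines "\<xi> \<equiv> xi_par lam \<mu>"
  defines "D \<equiv> (lam + \<mu> + 2*\<xi>*\<delta>)^2
      - 2 * (2 * (lam + \<mu> + 2*\<xi>*\<delta>)^2 - ((2*lam + \<mu>) * (\<mu> + 1) + 12*\<xi>*\<delta>)) * t^2"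
  defines "M \<equiv> \<bar>D\<bar> / (4 * (2*lam + \<mu> + 6*\<xi>*\<delta>) * t^2)"
  shows "(\<bar>\<eta> - 1\<bar> \<le> M \<longrightarrow>
           cmod (coeff_a f 3 - complex_of_real \<eta> * (coeff_a f 2)^2) \<le> 2*t / (2*lam + \<mu> + 6*\<xi>*\<delta>))
       \<and> (\<bar>\<eta> - 1\<bar> \<ge> M \<and> D \<noteq> 0 \<longrightarrow>
           cmod (coeff_a f 3 - complex_of_real \<eta> * (coeff_a f 2)^2) \<le> 8 * \<bar>\<eta> - 1\<bar> * t^3 / \<bar>D\<bar>)"
proof -
  have t: "1/2 < t" "t < 1" using assms(4,5) by auto
  have tp: "t > 0" using t by simp
  obtain g where fb: "bi_univalent f" and ui: "univalent_inverse_ext f g"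
      and Bf: "B_subord lam \<mu> \<delta> t f" and Bg: "B_subord lam \<mu> \<delta> t g"
    using assms(6) unfolding B_class_def by blast
  have fh: "f holomorphic_on ball 0 1" and f0: "f 0 = 0" and f1: "deriv f 0 = 1"
    using fb unfolding bi_univalent_def normalized_analytic_def by auto
  have gh: "g holomorphic_on ball 0 1" and g0: "g 0 = 0"
    using ui unfolding univalent_inverse_ext_def by auto
  note gd = inv_derivs[OF fh f0 f1 ui]
  obtain c1 P where Pb: "norm P \<le> 2" and
     e1: "complex_of_real (lam + \<mu> + 2 * xi_par lam \<mu> * \<delta>) * ((deriv ^^ 2) f 0 / 2) = 2 * complex_of_real t * c1" and
     e2: "2 * (complex_of_real (2*lam + \<mu> + 6 * xi_par lam \<mu> * \<delta>) * ((deriv ^^ 3) f 0 / 6)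
        + complex_of_real ((2*lam + \<mu>) * (\<mu> - 1) / 2) * ((deriv ^^ 2) f 0 / 2)^2)
       = (8 * complex_of_real t ^ 2 - 2) * c1^2 + 2 * complex_of_real t * P"
    using side[OF t fh f0 f1 Bf] by blast
  obtain d1 Q where Qb: "norm Q \<le> 2" and
     g1: "complex_of_real (lam + \<mu> + 2 * xi_par lam \<mu> * \<delta>) * ((deriv ^^ 2) g 0 / 2) = 2 * complex_of_real t * d1" and
     g2: "2 * (complex_of_real (2*lam + \<mu> + 6 * xi_par lam \<mu> * \<delta>) * ((deriv ^^ 3) g 0 / 6)
        + complex_of_real ((2*lam + \<mu>) * (\<mu> - 1) / 2) * ((deriv ^^ 2) g 0 / 2)^2)
       = (8 * complex_of_real t ^ 2 - 2) * d1^2 + 2 * complex_of_real t * Q"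
    using side[OF t gh g0 _ Bg] gd by blast
  define a2 where "a2 = (deriv ^^ 2) f 0 / 2"
  define a3 where "a3 = (deriv ^^ 3) f 0 / 6"
  define A where "A = lam + \<mu> + 2 * \<xi> * \<delta>"
  define B where "B = 2*lam + \<mu> + 6 * \<xi> * \<delta>"
  define C where "C = (2*lam + \<mu>) * (\<mu> - 1) / 2"
  have ca2: "coeff_a f 2 = a2" by (simp add: coeff_a_def a2_def)
  have ca3: "coeff_a f 3 = a3" by (simp add: coeff_a_def a3_def fact_numeral)
  have gb2: "(deriv ^^ 2) g 0 / 2 = - a2" using gd by (simp add: a2_def)
  have gb3: "(deriv ^^ 3) g 0 / 6 = 2 * a2^2 - a3" using gd by (simp add: a2_def a3_def power2_eq_square field_simps)
  have E1: "complex_of_real A * a2 = 2 * complex_of_real t * c1" using e1 by (simp add: A_def a2_def \<xi>_def)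
  have E2: "2 * (complex_of_real B * a3 + complex_of_real C * a2^2) = (8 * complex_of_real t ^ 2 - 2) * c1^2 + 2 * complex_of_real t * P"
    using e2 by (simp add: B_def C_def a2_def a3_def \<xi>_def)
  have G1: "complex_of_real A * (-a2) = 2 * complex_of_real t * d1" using g1 gb2 by (simp add: A_def \<xi>_def)
  have G2: "2 * (complex_of_real B * (2 * a2^2 - a3) + complex_of_real C * a2^2) = (8 * complex_of_real t ^ 2 - 2) * d1^2 + 2 * complex_of_real t * Q"
    using g2 gb2 gb3 by (simp add: B_def C_def \<xi>_def)
  have tnz: "complex_of_real t \<noteq> 0" using tp by simp
  note K = alg[OF E1 E2 G1 G2 tnz]
  have xi0: "\<xi> \<ge> 0" using assms(1,2) by (simp add: \<xi>_def xi_par_def)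
  have Bp: "B > 0" using assms(1,2,3) xi0 by (simp add: B_def add_pos_nonneg)
  have Dv: "D = 4*(B+C)*t^2 - (4*t^2-1)*A^2"
    by (simp add: D_def A_def B_def C_def power2_eq_square field_simps)
  have K1: "a3 - a2^2 = complex_of_real (t / (2*B)) * (P - Q)"
  proof -
    have nz: "complex_of_real (4*B) \<noteq> 0" using Bp by simp
    have k: "complex_of_real (4*B) * (a3 - a2^2) = complex_of_real (2*t) * (P-Q)" using K(1) by simp
    have "a3 - a2^2 = (complex_of_real (4*B) * (a3 - a2^2)) / complex_of_real (4*B)"
      by (rule nonzero_mult_div_cancel_left[OF nz, symmetric])
    also have "\<dots> = complex_of_real (2*t) * (P-Q) / complex_of_real (4*B)" by (simp only: k)
    also have "\<dots> = complex_of_real (t / (2*B)) * (P - Q)" using Bp by (simp add: field_simps)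
    finally show ?thesis .
  qed
  have K2: "complex_of_real D * a2^2 = complex_of_real (2*t^3) * (P+Q)" using K(2) unfolding Dv by simp
  define X where "X = a3 - complex_of_real \<eta> * a2^2"
  have Mv: "M = \<bar>D\<bar> / (4 * B * t^2)" by (simp add: M_def B_def)
  have gen: "norm X \<le> t * (\<bar>hr + 1/B\<bar> + \<bar>hr - 1/B\<bar>)" if Dnz: "D \<noteq> 0" and hr: "hr = 4*t^2*(1-\<eta>)/D" for hr
  proof -
    have K1': "a3 - a2^2 = complex_of_real t / (2 * complex_of_real B) * (P - Q)" using K1 by simp
    have K2': "complex_of_real D * a2^2 = 2 * complex_of_real t ^ 3 * (P + Q)" using K2 by simp
    have hrc: "complex_of_real hr = 4 * complex_of_real t ^ 2 * (1 - complex_of_real \<eta>) / complex_of_real D"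
      using hr by simp
    have "X = complex_of_real t / 2 * (complex_of_real hr + 1 / complex_of_real B) * P
        + complex_of_real t / 2 * (complex_of_real hr - 1 / complex_of_real B) * Q"
      unfolding X_def by (rule Xid[OF K1' K2' hrc]) (use Bp Dnz in auto)
    hence Xe: "X = complex_of_real (t/2*(hr + 1/B)) * P + complex_of_real (t/2*(hr - 1/B)) * Q"
      by simp
    have "norm X \<le> \<bar>t/2*(hr + 1/B)\<bar> * 2 + \<bar>t/2*(hr - 1/B)\<bar> * 2"
      unfolding Xe by (rule norm_comb[OF Pb Qb])
    also have "\<dots> = t * (\<bar>hr + 1/B\<bar> + \<bar>hr - 1/B\<bar>)"
    proof -
      have "\<bar>t/2*(hr + 1/B)\<bar> = t/2 * \<bar>hr + 1/B\<bar>" "\<bar>t/2*(hr - 1/B)\<bar> = t/2 * \<bar>hr - 1/B\<bar>"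
        using tp by (simp_all only: abs_mult abs_of_pos half_gt_zero)
      thus ?thesis by (simp add: algebra_simps)
    qed
    finally show ?thesis .
  qed
  have habs: "\<bar>4*t^2*(1-\<eta>)/D\<bar> = 4*t^2*\<bar>\<eta>-1\<bar>/\<bar>D\<bar>" by (simp add: abs_mult abs_divide abs_minus_commute)
  show ?thesis
  proof (intro conjI impI)
    assume hM: "\<bar>\<eta> - 1\<bar> \<le> M"
    show "cmod (coeff_a f 3 - complex_of_real \<eta> * (coeff_a f 2)^2) \<le> 2*t / (2*lam + \<mu> + 6*\<xi>*\<delta>)"
    proof (cases "D = 0")
      case True
      hence "\<eta> = 1" using hM by (simp add: M_def)
      hence "X = complex_of_real (t / (2*B)) * (P - Q)" using K1 by (simp add: X_def)
      hence "norm X = \<bar>t / (2*B)\<bar> * norm (P - Q)" by (simp only: norm_mult norm_of_real)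
      also have "\<dots> = t / (2*B) * norm (P - Q)" using tp Bp by simp
      also have "\<dots> \<le> t / (2*B) * (norm P + norm Q)" using tp Bp
        by (intro mult_left_mono norm_triangle_ineq4) auto
      also have "\<dots> \<le> t / (2*B) * 4" using Pb Qb tp Bp by (intro mult_left_mono) auto
      finally show ?thesis by (simp add: ca2 ca3 X_def[symmetric] B_def[symmetric])
    next
      case False
      define hr where "hr = 4*t^2*(1-\<eta>)/D"
      have "\<bar>hr\<bar> \<le> 1/B"
      proof -
        have "\<bar>\<eta> - 1\<bar> * (4 * B * t^2) \<le> \<bar>D\<bar>" using hM Bp tp unfolding Mv by (simp add: pos_le_divide_eq)
        thus ?thesis using Bp tp False unfolding hr_def habs by (simp add: field_simps)
      qed
      hence "\<bar>hr + 1/B\<bar> + \<bar>hr - 1/B\<bar> = 2/B" using abs_s1[of hr "1/B"] by simp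
      hence "norm X \<le> 2 * t / B" using gen[OF False hr_def] by (simp add: mult.commute)
      thus ?thesis by (simp add: ca2 ca3 X_def[symmetric] B_def[symmetric])
    qed
  next
    assume hM: "M \<le> \<bar>\<eta> - 1\<bar> \<and> D \<noteq> 0"
    hence Dnz: "D \<noteq> 0" by simp
    define hr where "hr = 4*t^2*(1-\<eta>)/D"
    have "\<bar>hr\<bar> \<ge> 1/B"
    proof -
      have "\<bar>D\<bar> \<le> \<bar>\<eta> - 1\<bar> * (4 * B * t^2)" using hM Bp tp unfolding Mv by (simp add: pos_divide_le_eq)
      thus ?thesis using Bp tp Dnz unfolding hr_def habs by (simp add: field_simps)
    qed
    hence "\<bar>hr + 1/B\<bar> + \<bar>hr - 1/B\<bar> = 2*\<bar>hr\<bar>" using Bp abs_s2[of "1/B" hr] by simp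
    hence "norm X \<le> t * (2 * \<bar>hr\<bar>)" using gen[OF Dnz hr_def] by simp
    moreover have "\<bar>hr\<bar> = 4*t^2*\<bar>\<eta>-1\<bar>/\<bar>D\<bar>" unfolding hr_def by (rule habs)
    ultimately have "norm X \<le> t * (2 * (4*t^2*\<bar>\<eta>-1\<bar>/\<bar>D\<bar>))" by simp
    also have "\<dots> = 8 * \<bar>\<eta> - 1\<bar> * t^3 / \<bar>D\<bar>" by (simp add: power3_eq_cube power2_eq_square)
    finally show "cmod (coeff_a f 3 - complex_of_real \<eta> * (coeff_a f 2)^2) \<le> 8 * \<bar>\<eta> - 1\<bar> * t^3 / \<bar>D\<bar>"
      by (simp add: ca2 ca3 X_def[symmetric])
  qed
qed

end
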